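(* Let $V$ be the set of the $24$ points of $\mathbb{R}^4$ obtained as all coordinate permutations of $(\pm 1,\pm 1,0,0)$; these are the vertices of the $24$-cell. The octahedral cells of the $24$-cell are the following $24$ six-element subsets of $V$: - for each of the $8$ vectors $c\in\{\pm e_1,\pm e_2,\pm e_3,\pm e_4\}$, the cell $C_c=\{v\in V : v\cdot c = 1\}$; - for each of the $16$ vectors $c\in\{(\pm1,\pm1,\pm1,\pm1)\}$, the cell $C_c=\{v\in V: v\cdot c=2\}$. Then there exists a bijection $f\colon V\to\{1,2,\dots,24\}$ such that $\sum_{v\in C}f(v)$ takes the same value for every one of these $24$ octahedral cells $C$. This common value is $75$.
   Context: Here $e_1,\dots,e_4$ are the standard basis vectors of $\mathbb{R}^4$ and $v\cdot c$ is the standard dot product. Each of the sets $C_c$ listed has exactly six elements, and these are the vertex sets of the $24$ octahedral cells of the $24$-cell. A bijection $f$ with equal cell sums is called a cell-magic (facet-magic) labeling, or magic $24$-cell. *)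

theory Defs
  imports "HOL-Analysis.Analysis" "HOL-Combinatorics.Permutations"
begin

definition cell24_vertices :: "(real^4) set" where
  "cell24_vertices =
     {v. \<exists>a b p. a \<in> {1,-1} \<and> b \<in> {1,-1} \<and> p permutes (UNIV :: 4 set) \<and>
         v = (\<chi> i. (vector [a, b, 0, 0] :: real^4) $ p i)}"

definition axis_centres :: "(real^4) set" where
  "axis_centres = {c. \<exists>i s. s \<in> {1,-1} \<and> c = axis i s}"

definition diag_centres :: "(real^4) set" where
  "diag_centres = {c. \<forall>i. c $ i \<in> {1,-1}}"

definition octa_cells :: "(real^4) set set" where
  "octa_cells =
     (\<lambda>c. {v \<in> cell24_vertices. v \<bullet> c = 1}) ` axis_centres \<union>
     (\<lambda>c. {v \<in> cell24_vertices. v \<bullet> c = 2}) ` diag_centres"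

end

theory Submission
  imports Defs
begin

definition mk :: "real \<Rightarrow> real \<Rightarrow> real \<Rightarrow> real \<Rightarrow> real^4" where
  "mk a b c d = vector [a, b, c, d]"

lemma mk_nth [simp]: "mk a b c d $ 1 = a" "mk a b c d $ 2 = b" "mk a b c d $ 3 = c" "mk a b c d $ 4 = d"
  unfolding mk_def vector_def by simp_all

lemma mk_eq [simp]: "mk a b c d = mk a' b' c' d' \<longleftrightarrow> a = a' \<and> b = b' \<and> c = c' \<and> d = d'"
  by (simp add: vec_eq_iff forall_4)

lemma mk_inner [simp]: "mk a b c d \<bullet> mk a' b' c' d' = a*a' + b*b' + c*c' + d*d'"
  by (simp add: inner_vec_def sum_4)

lemma vec_mk: "(v::real^4) = mk (v$1) (v$2) (v$3) (v$4)"
  by (simp add: vec_eq_iff forall_4)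

definition LL :: "(real^4) list" where
  "LL = [mk 1 1 0 0,
   mk 1 (-1) 0 0,
   mk (-1) 1 0 0,
   mk (-1) (-1) 0 0,
   mk 1 0 1 0,
   mk 1 0 (-1) 0,
   mk (-1) 0 1 0,
   mk (-1) 0 (-1) 0,
   mk 1 0 0 1,
   mk 1 0 0 (-1),
   mk (-1) 0 0 1,
   mk (-1) 0 0 (-1),
   mk 0 1 1 0,
   mk 0 1 (-1) 0,
   mk 0 (-1) 1 0,
   mk 0 (-1) (-1) 0,
   mk 0 1 0 1,
   mk 0 1 0 (-1),
   mk 0 (-1) 0 1,
   mk 0 (-1) 0 (-1),
   mk 0 0 1 1,
   mk 0 0 1 (-1),
   mk 0 0 (-1) 1,
   mk 0 0 (-1) (-1)]"

definition labs :: "nat list" where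
  "labs = [16, 23, 2, 9, 6, 12, 13, 19, 1, 17, 8, 24, 18, 4, 21, 7, 20, 15, 10, 5, 14, 3, 22, 11]"

definition ff :: "real^4 \<Rightarrow> nat" where
  "ff v = (case map_of (zip LL labs) v of Some n \<Rightarrow> n | None \<Rightarrow> 0)"

lemma key:
  assumes "x1 \<in> {-1,0,1}" "x2 \<in> {-1,0,1}" "x3 \<in> {-1,0,1}" "x4 \<in> {-1,0,1}"
    "x1^2 + x2^2 + x3^2 + x4^2 = (2::real)"
  shows "mk x1 x2 x3 x4 \<in> set LL"
  using assms unfolding LL_def by (elim insertE emptyE; simp)

lemma sub1: "cell24_vertices \<subseteq> set LL"
proof
  fix v assume "v \<in> cell24_vertices"
  then obtain a b p where ab: "a \<in> {1,-1}" "b \<in> {1,-1}" and p: "p permutes (UNIV :: 4 set)"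
    and v: "v = (\<chi> i. (vector [a, b, 0, 0] :: real^4) $ p i)"
    unfolding cell24_vertices_def by blast
  define w where "w = (vector [a, b, 0, 0] :: real^4)"
  have w: "w = mk a b 0 0" by (simp add: w_def mk_def)
  have comp: "v $ i \<in> {-1,0,1}" for i
  proof -
    have "v $ i = w $ p i" by (simp add: v w_def)
    moreover have "p i = 1 \<or> p i = 2 \<or> p i = 3 \<or> p i = 4" by (rule exhaust_4)
    ultimately show ?thesis using ab by (auto simp: w)
  qed
  have "(\<Sum>i\<in>UNIV. (v$i)^2) = (\<Sum>i\<in>UNIV. ((\<lambda>j. (w$j)^2) \<circ> p) i)"
    by (simp add: v w_def)
  also have "\<dots> = (\<Sum>j\<in>UNIV. (w$j)^2)"
    using sum.permute[OF p, of "\<lambda>j. (w$j)^2"] by simp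
  also have "\<dots> = 2" using ab by (auto simp: sum_4 w)
  finally have "(v$1)^2 + (v$2)^2 + (v$3)^2 + (v$4)^2 = 2" by (simp add: sum_4)
  then have "mk (v$1) (v$2) (v$3) (v$4) \<in> set LL"
    using comp by (intro key) auto
  then show "v \<in> set LL" by (subst vec_mk) assumption
qed

lemma memI:
  assumes "a \<in> {1,-1}" "b \<in> {1,-1}" "p permutes (UNIV :: 4 set)"
    and "v = (\<chi> i. (mk a b 0 0) $ p i)"
  shows "v \<in> cell24_vertices"
  using assms unfolding cell24_vertices_def mk_def by blast

lemma sub2: "set LL \<subseteq> cell24_vertices"
proof -
  have P1: "id permutes (UNIV :: 4 set)" by (rule permutes_id)
  have P2: "Transposition.transpose 2 3 permutes (UNIV :: 4 set)" by (simp add: permutes_swap_id)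
  have P3: "Transposition.transpose 2 4 permutes (UNIV :: 4 set)" by (simp add: permutes_swap_id)
  have P4: "Transposition.transpose 2 3 \<circ> Transposition.transpose 1 2 permutes (UNIV :: 4 set)"
    by (intro permutes_compose permutes_swap_id) auto
  have P5: "Transposition.transpose 2 4 \<circ> Transposition.transpose 1 2 permutes (UNIV :: 4 set)"
    by (intro permutes_compose permutes_swap_id) auto
  have P6: "Transposition.transpose 1 3 \<circ> Transposition.transpose 2 4 permutes (UNIV :: 4 set)"
    by (intro permutes_compose permutes_swap_id) auto
  have E: "\<And>a b. mk a b 0 0 = (\<chi> i. (mk a b 0 0) $ id i)"
    "\<And>a b. mk a 0 b 0 = (\<chi> i. (mk a b 0 0) $ Transposition.transpose 2 3 i)"
    "\<And>a b. mk a 0 0 b = (\<chi> i. (mk a b 0 0) $ Transposition.transpose 2 4 i)"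
    "\<And>a b. mk 0 a b 0 = (\<chi> i. (mk a b 0 0) $ (Transposition.transpose 2 3 \<circ> Transposition.transpose 1 2) i)"
    "\<And>a b. mk 0 a 0 b = (\<chi> i. (mk a b 0 0) $ (Transposition.transpose 2 4 \<circ> Transposition.transpose 1 2) i)"
    "\<And>a b. mk 0 0 a b = (\<chi> i. (mk a b 0 0) $ (Transposition.transpose 1 3 \<circ> Transposition.transpose 2 4) i)"
    by (simp_all add: vec_eq_iff forall_4 transpose_def)
  have M: "\<And>a b. a \<in> {1,-1} \<Longrightarrow> b \<in> {1,-1} \<Longrightarrow>
     mk a b 0 0 \<in> cell24_vertices \<and> mk a 0 b 0 \<in> cell24_vertices \<and> mk a 0 0 b \<in> cell24_vertices \<and>
     mk 0 a b 0 \<in> cell24_vertices \<and> mk 0 a 0 b \<in> cell24_vertices \<and> mk 0 0 a b \<in> cell24_vertices"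
    by (intro conjI; rule memI[OF _ _ P1 E(1)] memI[OF _ _ P2 E(2)] memI[OF _ _ P3 E(3)]
      memI[OF _ _ P4 E(4)] memI[OF _ _ P5 E(5)] memI[OF _ _ P6 E(6)]; assumption)
  show ?thesis
    using M[of 1 1] M[of 1 "-1"] M[of "-1" 1] M[of "-1" "-1"]
    unfolding LL_def list.set insert_subset by (simp only: insert_iff singleton_iff simp_thms empty_subsetI)
qed

lemma V_eq: "cell24_vertices = set LL"
  using sub1 sub2 by blast


lemma img: "ff ` set LL = {1..24}"
proof -
  have "ff ` set LL = set (map ff LL)" by simp
  also have "\<dots> = {16, 23, 2, 9, 6, 12, 13, 19, 1, 17, 8, 24, 18, 4, 21, 7, 20, 15,
      10, 5, 14, 3, 22, 11}" by (simp add: LL_def ff_def labs_def)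
  also have "\<dots> = {1..24::nat}"
  proof (rule card_subset_eq)
    show "finite {1..24::nat}" by simp
    show "{16, 23, 2, 9, 6, 12, 13, 19, 1, 17, 8, 24, 18, 4, 21, 7, 20, 15,
      10, 5, 14, 3, 22, 11} \<subseteq> {1..24::nat}" by simp
    show "card {16::nat, 23, 2, 9, 6, 12, 13, 19, 1, 17, 8, 24, 18, 4, 21, 7, 20, 15,
      10, 5, 14, 3, 22, 11} = card {1..24::nat}" by simp
  qed
  finally show ?thesis .
qed

lemma inj: "inj_on ff (set LL)"
proof -
  have "card (ff ` set LL) = 24" using img by simp
  moreover have "card (set LL) \<le> 24" using card_length[of LL] by (simp add: LL_def)
  moreover have "card (ff ` set LL) \<le> card (set LL)" by (rule card_image_le) simp
  ultimately have "card (ff ` set LL) = card (set LL)" by simp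
  then show ?thesis by (rule eq_card_imp_inj_on[OF finite_set])
qed

lemma cellsum: "sum ff {v \<in> set LL. P v} = sum id (set (map ff (filter P LL)))"
proof -
  have "{v \<in> set LL. P v} = set (filter P LL)" by auto
  moreover have "inj_on ff (set (filter P LL))" using inj by (rule inj_on_subset) auto
  ultimately show ?thesis by (simp add: sum.reindex)
qed

lemma axis_sum:
  assumes "i = 1 \<or> i = 2 \<or> i = 3 \<or> i = (4::4)" "s \<in> {1,-1::real}"
  shows "sum ff {v \<in> set LL. v \<bullet> axis i s = 1} = 75"
proof -
  have "s = 1 \<or> s = -1" using assms(2) by auto
  with assms(1) show ?thesis
    unfolding cellsum inner_axis by (elim disjE; simp add: LL_def ff_def labs_def)
qed

lemma diag_sum:
  assumes "a \<in> {1,-1}" "b \<in> {1,-1}" "c \<in> {1,-1}" "d \<in> {1,-1::real}"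
  shows "sum ff {v \<in> set LL. v \<bullet> mk a b c d = 2} = 75"
proof -
  have "a = 1 \<or> a = -1" "b = 1 \<or> b = -1" "c = 1 \<or> c = -1" "d = 1 \<or> d = -1"
    using assms by auto
  then show ?thesis
    unfolding cellsum by (elim disjE; simp add: LL_def ff_def labs_def)
qed

theorem mainTheorem1:
  shows "\<exists>f. bij_betw f cell24_vertices {1..(24::nat)} \<and>
             (\<forall>C \<in> octa_cells. (\<Sum>v\<in>C. f v) = 75)"
proof (intro exI conjI)
  show "bij_betw ff cell24_vertices {1..24}"
    unfolding V_eq bij_betw_def using inj img by blast
  show "\<forall>C \<in> octa_cells. (\<Sum>v\<in>C. ff v) = 75"
  proof
    fix C assume "C \<in> octa_cells"
    then consider (ax) i s where "s \<in> {1,-1}" "C = {v \<in> cell24_vertices. v \<bullet> axis i s = 1}"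
      | (dg) c where "\<forall>i. c $ i \<in> {1,-1}" "C = {v \<in> cell24_vertices. v \<bullet> c = 2}"
      unfolding octa_cells_def axis_centres_def diag_centres_def by blast
    then show "(\<Sum>v\<in>C. ff v) = 75"
    proof cases
      case ax
      then show ?thesis unfolding V_eq using axis_sum[OF exhaust_4[of i]] by simp
    next
      case dg
      have e: "c = mk (c$1) (c$2) (c$3) (c$4)" by (rule vec_mk)
      have "sum ff {v \<in> set LL. v \<bullet> c = 2} = 75"
        by (subst e, rule diag_sum) (use dg(1) in auto)
      then show ?thesis using dg(2) V_eq by simp
    qed
  qed
qed

end
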